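(* Let $n\ge 3$ and let $m,a,b,c$ be integers with $m\ge 0$, $a\ge1$, $b\ge 1$, $c\ge 1$ and $a+b+c=n$. Put $$V=(s_{a+b+1}s_{a+b+2}\cdots s_{n-1})\,(s_ns_{n-1}\cdots s_{a+b+1})\,(s_as_{a-1}\cdots s_2),$$ $$W=(s_{a+b+1}s_{a+b+2}\cdots s_{n-1})\,(s_ns_{n-1}\cdots s_{a+b+1})\,(s_1s_2\cdots s_{a+b-1})\,(s_{a+b}s_{a+b-1}\cdots s_2s_1).$$ Then $$((m+1)^a,m^b,(m+1)^c)=W^m V(\alpha_1).$$ In particular $((m+1)^a,m^b,(m+1)^c)$ is a positive real root.
   Context: Notation: $(x^a,y^b,z^c)$ denotes the vector in $\mathbb{Z}^n$ whose first $a$ entries equal $x$, next $b$ entries equal $y$ and last $c$ entries equal $z$. The simple roots $\alpha_1,\dots,\alpha_n$ are the standard basis vectors of $\mathbb{Z}^n$. For $1\le i\le n$ the simple reflection $s_i:\mathbb{Z}^n\to\mathbb{Z}^n$ is the linear map which changes only the $i$-th coordinate of $v=(v^1,\dots,v^n)$, replacing $v^i$ by $v^{i-1}+v^{i+1}-v^i$, with indices modulo $n$ in $\{1,\dots,n\}$. Products are compositions of maps (the rightmost factor acts first). Convention: an ascending product $s_js_{j+1}\cdots s_l$ with $l<j$ and a descending product $s_ls_{l-1}\cdots s_j$ with $l<j$ are both the identity map. A real root is a vector $s_{i_1}\cdots s_{i_j}(\alpha_k)$; it is positive if its entries are nonnegative. *)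

theory Defs
  imports Main
begin

text \<open>Vectors in Z^n are int lists of length n; coordinate i (1 <= i <= n) is v ! (i - 1).\<close>

definition cprev :: "nat \<Rightarrow> nat \<Rightarrow> nat" where
  "cprev n i = (if i = 1 then n else i - 1)"

definition cnext :: "nat \<Rightarrow> nat \<Rightarrow> nat" where
  "cnext n i = (if i = n then 1 else i + 1)"

definition sref :: "nat \<Rightarrow> nat \<Rightarrow> int list \<Rightarrow> int list" where
  "sref n i v = v[i - 1 := v ! (cprev n i - 1) + v ! (cnext n i - 1) - v ! (i - 1)]"

text \<open>Product s_{i_1} ... s_{i_k} of a word (composition, rightmost acts first).\<close>
definition sword :: "nat \<Rightarrow> nat list \<Rightarrow> int list \<Rightarrow> int list" where
  "sword n is = foldr (\<lambda>i f. sref n i \<circ> f) is id"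

definition asc :: "nat \<Rightarrow> nat \<Rightarrow> nat \<Rightarrow> int list \<Rightarrow> int list" where
  "asc n j l = sword n [j..<Suc l]"

definition desc :: "nat \<Rightarrow> nat \<Rightarrow> nat \<Rightarrow> int list \<Rightarrow> int list" where
  "desc n l j = sword n (rev [j..<Suc l])"

definition sroot :: "nat \<Rightarrow> nat \<Rightarrow> int list" where
  "sroot n k = map (\<lambda>j. if j = k then 1 else 0) [1..<Suc n]"

definition real_root :: "nat \<Rightarrow> int list \<Rightarrow> bool" where
  "real_root n v \<longleftrightarrow> (\<exists>is k. set is \<subseteq> {1..n} \<and> k \<in> {1..n} \<and> v = sword n is (sroot n k))"

definition positive_real_root :: "nat \<Rightarrow> int list \<Rightarrow> bool" where
  "positive_real_root n v \<longleftrightarrow> real_root n v \<and> (\<forall>x \<in> set v. 0 \<le> x)"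

end

theory Submission imports Defs begin

definition tv :: "nat \<Rightarrow> (nat \<Rightarrow> int) \<Rightarrow> int list" where
  "tv n f = map f [1..<Suc n]"

lemma tv_cong: "(\<And>i. 1 \<le> i \<Longrightarrow> i \<le> n \<Longrightarrow> f i = g i) \<Longrightarrow> tv n f = tv n g"
  unfolding tv_def by (rule map_cong) auto

lemma sword_Nil[simp]: "sword n [] = id" by (simp add: sword_def)
lemma sword_Cons: "sword n (x # xs) = sref n x \<circ> sword n xs" by (simp add: sword_def)
lemma sword_append: "sword n (xs @ ys) = sword n xs \<circ> sword n ys"
  by (induction xs) (auto simp: sword_Cons)

lemma tv_nth: "p < n \<Longrightarrow> tv n f ! p = f (Suc p)"
  unfolding tv_def by (simp del: upt_Suc)

lemma tv_nth1: "1 \<le> k \<Longrightarrow> k \<le> n \<Longrightarrow> tv n f ! (k - 1) = f k"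
  using tv_nth[of "k - 1" n f] by simp

lemma tv_length[simp]: "length (tv n f) = n"
  unfolding tv_def by simp

lemma sref_tv:
  assumes "1 \<le> i" "i \<le> n"
  shows "sref n i (tv n f) = tv n (f(i := f (cprev n i) + f (cnext n i) - f i))"
proof -
  have r: "1 \<le> cprev n i \<and> cprev n i \<le> n \<and> 1 \<le> cnext n i \<and> cnext n i \<le> n"
    using assms by (auto simp: cprev_def cnext_def)
  have X: "tv n f ! (cprev n i - 1) + tv n f ! (cnext n i - 1) - tv n f ! (i - 1)
     = f (cprev n i) + f (cnext n i) - f i"
    using r assms tv_nth1[of "cprev n i" n f] tv_nth1[of "cnext n i" n f] tv_nth1[of i n f] by simp
  show ?thesis
    unfolding sref_def X
  proof (rule nth_equalityI)
    show "length ((tv n f)[i - 1 := f (cprev n i) + f (cnext n i) - f i]) =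
          length (tv n (f(i := f (cprev n i) + f (cnext n i) - f i)))" by simp
    fix p assume "p < length ((tv n f)[i - 1 := f (cprev n i) + f (cnext n i) - f i])"
    then have p: "p < n" by simp
    show "(tv n f)[i - 1 := f (cprev n i) + f (cnext n i) - f i] ! p =
          tv n (f(i := f (cprev n i) + f (cnext n i) - f i)) ! p"
      using p assms by (auto simp: nth_list_update tv_nth)
  qed
qed

lemma desc_tv:
  assumes "1 \<le> j" "l \<le> n" "\<not> (j = 1 \<and> l = n)"
  shows "desc n l j (tv n f) = tv n (\<lambda>i. if j \<le> i \<and> i \<le> l then f (cnext n i) + f (cprev n j) - f j else f i)"
  using assms
proof (induction l)
  case 0
  then show ?case by (auto simp: desc_def intro!: tv_cong)
next
  case (Suc l)
  show ?case
  proof (cases "Suc l < j")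
    case True
    then show ?thesis by (auto simp: desc_def intro!: tv_cong)
  next
    case False
    then have e: "desc n (Suc l) j = sref n (Suc l) \<circ> desc n l j"
      by (simp add: desc_def sword_Cons)
    have IH: "desc n l j (tv n f) = tv n (\<lambda>i. if j \<le> i \<and> i \<le> l then f (cnext n i) + f (cprev n j) - f j else f i)"
      using Suc by auto
    show ?thesis
      unfolding e comp_def IH
      apply (subst sref_tv)
      using Suc.prems apply simp
      using Suc.prems apply simp
      apply (rule tv_cong)
      using Suc.prems False
      apply (cases "j = Suc l")
      apply (auto simp: cprev_def cnext_def)
      done
  qed
qed

lemma asc_tv:
  assumes "1 \<le> j" "l < n"
  shows "asc n j l (tv n f) = tv n (\<lambda>i. if j \<le> i \<and> i \<le> l then f (cprev n i) + f (Suc l) - f l else f i)"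
proof (cases "j \<le> Suc l")
  case False
  then show ?thesis by (auto simp: asc_def intro!: tv_cong)
next
  case True
  show ?thesis using True assms(1)
  proof (induction j rule: inc_induct)
    case base
    then show ?case by (auto simp: asc_def intro!: tv_cong)
  next
    case (step k)
    have e: "asc n k l = sref n k \<circ> asc n (Suc k) l"
      using step by (simp add: asc_def upt_conv_Cons sword_Cons del: upt_Suc)
    have IH: "asc n (Suc k) l (tv n f) = tv n (\<lambda>i. if Suc k \<le> i \<and> i \<le> l then f (cprev n i) + f (Suc l) - f l else f i)"
      using step by auto
    show ?case
      unfolding e comp_def IH
      apply (subst sref_tv)
      using step assms apply simp
      using step assms apply simp
      apply (rule tv_cong)
      using step assms
      apply (cases "k = l")
      apply (auto simp: cprev_def cnext_def)
      done
  qed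
qed

theorem theorem4p1:
  fixes n m a b c :: nat
  assumes "n \<ge> 3" and "a \<ge> 1" and "b \<ge> 1" and "c \<ge> 1" and "a + b + c = n"
  defines "V \<equiv> asc n (a+b+1) (n-1) \<circ> desc n n (a+b+1) \<circ> desc n a 2"
      and "W \<equiv> asc n (a+b+1) (n-1) \<circ> desc n n (a+b+1) \<circ> asc n 1 (a+b-1) \<circ> desc n (a+b) 1"
  shows "replicate a (int m + 1) @ replicate b (int m) @ replicate c (int m + 1)
           = (W ^^ m) (V (sroot n 1)) \<and>
         positive_real_root n (replicate a (int m + 1) @ replicate b (int m) @ replicate c (int m + 1))"
proof -
  define T where "T k i = int k + (if i \<le> a \<or> a + b < i then 1 else 0)" for k i
  have s1: "sroot n 1 = tv n (\<lambda>j. if j = 1 then 1 else 0)"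
    by (simp add: sroot_def tv_def)
  have v1: "desc n a 2 (tv n (\<lambda>j. if j = 1 then 1 else 0)) = tv n (\<lambda>i. if i \<le> a then 1 else 0)"
    apply (subst desc_tv, use assms in simp, use assms in simp, use assms in simp)
    apply (rule tv_cong)
    using assms by (auto simp: cprev_def cnext_def)
  have v2: "desc n n (a+b+1) (tv n (\<lambda>i. if i \<le> a then 1 else 0)) = tv n (\<lambda>i. if i \<le> a \<or> i = n then 1 else 0)"
    apply (subst desc_tv, use assms in simp, use assms in simp, use assms in simp)
    apply (rule tv_cong)
    using assms by (auto simp: cprev_def cnext_def)
  have v3: "asc n (a+b+1) (n-1) (tv n (\<lambda>i. if i \<le> a \<or> i = n then 1 else 0)) = tv n (T 0)"
    apply (subst asc_tv, use assms in simp, use assms in simp)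
    apply (rule tv_cong)
    using assms by (auto simp: T_def cprev_def cnext_def)
  have V0: "V (sroot n 1) = tv n (T 0)"
    unfolding V_def comp_def s1 v1 v2 v3 ..
  have w1: "desc n (a+b) 1 (tv n (T k)) = tv n (\<lambda>i. int k + (if i < a \<or> a + b \<le> i then 1 else 0))" for k
    apply (subst desc_tv, use assms in simp, use assms in simp, use assms in simp)
    apply (rule tv_cong)
    using assms by (auto simp: T_def cprev_def cnext_def)
  have w2: "asc n 1 (a+b-1) (tv n (\<lambda>i. int k + (if i < a \<or> a + b \<le> i then 1 else 0))) = tv n (\<lambda>i. int k + 1 + (if i \<le> a then 1 else 0))" for k
    apply (subst asc_tv, use assms in simp, use assms in simp)
    apply (rule tv_cong)
    using assms by (auto simp: cprev_def cnext_def)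
  have w3: "desc n n (a+b+1) (tv n (\<lambda>i. int k + 1 + (if i \<le> a then 1 else 0))) = tv n (\<lambda>i. int k + 1 + (if i \<le> a \<or> i = n then 1 else 0))" for k
    apply (subst desc_tv, use assms in simp, use assms in simp, use assms in simp)
    apply (rule tv_cong)
    using assms by (auto simp: cprev_def cnext_def)
  have w4: "asc n (a+b+1) (n-1) (tv n (\<lambda>i. int k + 1 + (if i \<le> a \<or> i = n then 1 else 0))) = tv n (T (Suc k))" for k
    apply (subst asc_tv, use assms in simp, use assms in simp)
    apply (rule tv_cong)
    using assms by (auto simp: T_def cprev_def cnext_def)
  have Ws: "W (tv n (T k)) = tv n (T (Suc k))" for k
    unfolding W_def comp_def w1 w2 w3 w4 ..
  have it: "(W ^^ k) (V (sroot n 1)) = tv n (T k)" for k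
  proof (induction k)
    case 0
    show ?case using V0 by (simp only: funpow_0)
  next
    case (Suc k)
    then show ?case using Ws by (simp only: funpow.simps comp_def)
  qed
  have rep: "replicate a (int m + 1) @ replicate b (int m) @ replicate c (int m + 1) = tv n (T m)"
  proof (rule nth_equalityI)
    show "length (replicate a (int m + 1) @ replicate b (int m) @ replicate c (int m + 1)) = length (tv n (T m))"
      using assms by simp
    fix p assume "p < length (replicate a (int m + 1) @ replicate b (int m) @ replicate c (int m + 1))"
    then have p: "p < n" using assms by simp
    show "(replicate a (int m + 1) @ replicate b (int m) @ replicate c (int m + 1)) ! p = tv n (T m) ! p"
      using p assms by (auto simp: tv_nth T_def nth_append)
  qed
  define wW where "wW = [a+b+1..<n] @ rev [a+b+1..<Suc n] @ [1..<a+b] @ rev [1..<Suc (a+b)]"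
  define wV where "wV = [a+b+1..<n] @ rev [a+b+1..<Suc n] @ rev [2..<Suc a]"
  have Ww: "W = sword n wW"
    unfolding W_def wW_def asc_def desc_def sword_append using assms
    by (simp add: comp_assoc)
  have Vw: "V = sword n wV"
    unfolding V_def wV_def asc_def desc_def sword_append using assms
    by (simp add: comp_assoc)
  have Wp: "W ^^ k = sword n (concat (replicate k wW))" for k
    by (induction k) (simp_all add: sword_append Ww)
  have rr: "real_root n (tv n (T m))"
    unfolding real_root_def
  proof (intro exI conjI)
    show "set (concat (replicate m wW) @ wV) \<subseteq> {1..n}"
      using assms by (auto simp: wW_def wV_def)
    show "(1::nat) \<in> {1..n}" using assms by simp
    show "tv n (T m) = sword n (concat (replicate m wW) @ wV) (sroot n 1)"
      using it[of m] by (simp add: sword_append Wp Vw)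
  qed
  have nn: "\<forall>x \<in> set (replicate a (int m + 1) @ replicate b (int m) @ replicate c (int m + 1)). 0 \<le> x"
    by auto
  show ?thesis
    using it[of m] rr nn unfolding positive_real_root_def rep by simp
qed

end
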